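(* Let $\mathbb{K}\in\{\mathbb{Q},\mathbb{R},\mathbb{C}\}$, let $d\ge 0$ and $a$ be integers, and put $r:=-(a+d)$ (the degree). Let $H(t)=\sum_{i=0}^\infty \gamma_i (1-t)^{i-d}$, $\gamma_i\in\mathbb{K}$, be a formal Laurent series around $t=1$ of pole order at most $d$, and stipulate $\gamma_i=0$ for $i<0$. Then $H$ satisfies the functional equation $$H(t^{-1})=(-1)^d t^{-a}H(t)$$ if and only if the following conditions hold. If $r$ is even, then for each $m\ge 1$: $$\sum_{i=0}^{m-1}(-1)^i\binom{m-1}{i}\gamma_{m-r+i}=0. \qquad (\mathrm{A})$$ If $r>0$ is odd, then for each $m\ge 1$: $$\sum_{i=0}^{m}(-1)^i\binom{2m+r-2}{m-i}\binom{m+i}{i}\gamma_{m+i-1}=0. \qquad (\mathrm{B})$$ If $r<0$ (of either parity), then for each $1\le m\le \lceil -r/2\rceil$: $$\sum_{i=0}^{m}\binom{m}{i}\binom{1-r}{m+i}^{-1}\gamma_{m+i-1}=0, \qquad (\mathrm{C})$$ and moreover, if $r<0$ is odd, then for each $m\ge1$: $$\sum_{i=0}^{m}(-1)^i\binom{m}{i}\frac{m+i}{m}\gamma_{m-r+i}=0. \qquad (\mathrm{D})$$ (Thus for $r<0$ even the conditions are (A) for all $m\ge1$ together with (C); for $r<0$ odd they are (C) together with (D).)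
   Context: The functional equation is understood as an identity of formal Laurent series in $u=1-t$: one substitutes $t=1-u$, $t^{-1}=\sum_{j\ge0}u^j$, $1-t^{-1}=-u/(1-u)$, so that $H(t^{-1})=\sum_i\gamma_i\left(-u/(1-u)\right)^{i-d}$, and $t^{-a}=(1-u)^{-a}$ is expanded as a power series in $u$. *)

theory Defs
  imports Complex_Main "HOL-Computational_Algebra.Formal_Laurent_Series"
begin

text \<open>All series are formal Laurent series in the variable u = 1 - t.\<close>

definition H_ser :: "nat \<Rightarrow> (nat \<Rightarrow> 'a::field) \<Rightarrow> 'a fls" where
  "H_ser d \<gamma> = fls_X powi (- int d) * fps_to_fls (Abs_fps \<gamma>)"

text \<open>The substitution t -> t^(-1) in terms of u: u -> 1 - 1/(1-u) = -u/(1-u).\<close>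
definition u_inv_sub :: "'a::field fps" where
  "u_inv_sub = - fps_X * inverse (1 - fps_X)"

definition func_eq :: "nat \<Rightarrow> int \<Rightarrow> (nat \<Rightarrow> 'a::field) \<Rightarrow> bool" where
  "func_eq d a \<gamma> \<longleftrightarrow>
     fls_compose_fps (H_ser d \<gamma>) u_inv_sub
       = (-1) ^ d * (fps_to_fls (1 - fps_X)) powi (- a) * H_ser d \<gamma>"

definition gam :: "(nat \<Rightarrow> 'a::zero) \<Rightarrow> int \<Rightarrow> 'a" where
  "gam \<gamma> i = (if i < 0 then 0 else \<gamma> (nat i))"

definition condA :: "int \<Rightarrow> (nat \<Rightarrow> 'a::field) \<Rightarrow> nat \<Rightarrow> bool" where
  "condA r \<gamma> m \<longleftrightarrow>
     (\<Sum>i=0..m-1. (-1) ^ i * of_nat ((m-1) choose i) * gam \<gamma> (int m - r + int i)) = 0"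

definition condB :: "int \<Rightarrow> (nat \<Rightarrow> 'a::field) \<Rightarrow> nat \<Rightarrow> bool" where
  "condB r \<gamma> m \<longleftrightarrow>
     (\<Sum>i=0..m. (-1) ^ i * of_nat (nat (2 * int m + r - 2) choose (m - i))
        * of_nat ((m + i) choose i) * gam \<gamma> (int m + int i - 1)) = 0"

definition condC :: "int \<Rightarrow> (nat \<Rightarrow> 'a::field) \<Rightarrow> nat \<Rightarrow> bool" where
  "condC r \<gamma> m \<longleftrightarrow>
     (\<Sum>i=0..m. of_nat (m choose i) / of_nat (nat (1 - r) choose (m + i))
        * gam \<gamma> (int m + int i - 1)) = 0"

definition condD :: "int \<Rightarrow> (nat \<Rightarrow> 'a::field) \<Rightarrow> nat \<Rightarrow> bool" where
  "condD r \<gamma> m \<longleftrightarrow>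
     (\<Sum>i=0..m. (-1) ^ i * of_nat (m choose i) * (of_nat (m + i) / of_nat m)
        * gam \<gamma> (int m - r + int i)) = 0"

definition degree_conditions :: "nat \<Rightarrow> int \<Rightarrow> (nat \<Rightarrow> 'a::field) \<Rightarrow> bool" where
  "degree_conditions d a \<gamma> \<longleftrightarrow>
     (let r = - (a + int d) in
       (even r \<longrightarrow> (\<forall>m\<ge>1. condA r \<gamma> m)) \<and>
       (r > 0 \<and> odd r \<longrightarrow> (\<forall>m\<ge>1. condB r \<gamma> m)) \<and>
       (r < 0 \<longrightarrow> (\<forall>m. 1 \<le> m \<and> int m \<le> \<lceil>real_of_int (- r) / 2\<rceil> \<longrightarrow> condC r \<gamma> m)) \<and>
       (r < 0 \<and> odd r \<longrightarrow> (\<forall>m\<ge>1. condD r \<gamma> m)))"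

end

theory Submission
  imports Defs
begin
definition Phi :: "int \<Rightarrow> (nat \<Rightarrow> 'a::field_char_0) \<Rightarrow> nat \<Rightarrow> 'a" where
  "Phi r g n = (\<Sum>j=0..n. (-1)^j * (of_int (int n + r - 1) gchoose (n - j)) * g j)"


definition EE :: "int \<Rightarrow> 'a::field_char_0 fps" where
  "EE e = Abs_fps (\<lambda>k. (-1)^k * (of_int e gchoose k))"

lemma EE_nth: "EE e $ k = (-1)^k * (of_int e gchoose k)"
  by (simp add: EE_def)

lemma EE_add: "EE (a + b) = (EE a * EE b :: 'a::field_char_0 fps)"
proof (rule fps_ext)
  fix n
  have "(EE a * EE b :: 'a fps) $ n = (\<Sum>i=0..n. (-1)^i * (of_int a gchoose i) * ((-1)^(n-i) * (of_int b gchoose (n-i))))"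
    by (simp add: fps_mult_nth EE_nth mult.assoc)
  also have "\<dots> = (\<Sum>i=0..n. (-1)^n * ((of_int a gchoose i) * (of_int b gchoose (n-i))))"
    by (rule sum.cong) (auto simp: power_add[symmetric])
  also have "\<dots> = (-1)^n * ((of_int a + of_int b) gchoose n)"
    by (simp add: sum_distrib_left[symmetric] gbinomial_Vandermonde)
  finally show "EE (a+b) $ n = (EE a * EE b :: 'a fps) $ n" by (simp add: EE_nth)
qed

lemma EE_0 [simp]: "EE 0 = 1"
proof (rule fps_ext)
  fix n show "EE 0 $ n = (1::'a::field_char_0 fps) $ n"
    by (cases n) (simp_all add: EE_nth gbinomial_0)
qed

lemma EE_1: "EE 1 = (1 - fps_X :: 'a::field_char_0 fps)"
proof (rule fps_ext)
  fix n
  show "EE 1 $ n = (1 - fps_X :: 'a fps) $ n"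
  proof (cases "n \<ge> 2")
    case True
    have "(1::'a) gchoose n = of_nat (1 choose n)"
      by (metis binomial_gbinomial of_nat_1)
    with True show ?thesis by (simp add: EE_nth)
  next
    case False
    then have "n = 0 \<or> n = 1" by auto
    then show ?thesis by (auto simp: EE_nth)
  qed
qed

lemma EE_inv: "EE a * EE (-a) = (1 :: 'a::field_char_0 fps)"
  using EE_add[of a "-a"] by simp

lemma EE_nz: "EE a \<noteq> (0 :: 'a::field_char_0 fps)"
  using EE_inv[of a] by (metis mult_zero_left zero_neq_one)

lemma EE_pow: "EE a ^ n = (EE (a * int n) :: 'a::field_char_0 fps)"
  by (induction n) (simp_all add: EE_add[symmetric] algebra_simps)

definition SS :: "'a::field_char_0 fps" where
  "SS = - fps_X * EE (-1)"

lemma SS_eq: "SS = (u_inv_sub :: 'a::field_char_0 fps)"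
proof -
  have "EE (-1) = inverse (1 - fps_X :: 'a fps)"
    using EE_inv[of 1] by (intro fps_inverse_unique[symmetric]) (simp add: EE_1)
  then show ?thesis by (simp add: SS_def u_inv_sub_def)
qed

lemma SS_0 [simp]: "SS $ 0 = 0"
  by (simp add: SS_def)

lemma SS_nz: "SS \<noteq> (0::'a::field_char_0 fps)"
proof
  assume "SS = (0::'a fps)"
  then have "(SS * EE 1 :: 'a fps) = 0" by simp
  moreover have "(SS * EE 1 :: 'a fps) = - fps_X"
    by (simp add: SS_def mult.assoc EE_add[symmetric])
  ultimately show False by simp
qed

lemma SS_pow: "SS ^ j = ((-1)^j * fps_X ^ j * EE (- int j) :: 'a::field_char_0 fps)"
proof -
  have "SS ^ j = ((-1) * fps_X * EE (-1) :: 'a fps) ^ j" by (simp add: SS_def)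
  also have "\<dots> = (-1)^j * fps_X^j * EE (-1) ^ j" by (simp only: power_mult_distrib)
  also have "EE (-1) ^ j = (EE (- int j) :: 'a fps)" by (simp add: EE_pow)
  finally show ?thesis .
qed

lemma EE1_compose: "EE 1 oo SS = (EE (-1) :: 'a::field_char_0 fps)"
proof -
  have "EE 1 oo SS = (1 - SS :: 'a fps)"
    by (simp add: EE_1 fps_compose_sub_distrib)
  also have "\<dots> = EE (-1) * (EE 1 + fps_X)"
    by (simp add: SS_def algebra_simps EE_add[symmetric])
  also have "EE 1 + fps_X = (1 :: 'a fps)" by (simp add: EE_1)
  finally show ?thesis by simp
qed

lemma EE_compose_inv: "(EE a oo SS) * (EE (-a) oo SS) = (1::'a::field_char_0 fps)"
  by (simp add: fps_compose_mult_distrib[symmetric] EE_inv)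

lemma EE_compose: "EE a oo SS = (EE (-a) :: 'a::field_char_0 fps)"
proof (cases "a \<ge> 0")
  case True
  then obtain n where a: "a = int n" by (metis nonneg_eq_int)
  have "EE a oo SS = ((EE 1 oo SS) ^ n :: 'a fps)"
    by (simp add: a fps_compose_power EE_pow)
  also have "\<dots> = (EE (-a) :: 'a fps)"
    by (simp add: EE1_compose EE_pow a)
  finally show ?thesis .
next
  case False
  then obtain n where a: "a = - int n" by (metis neg_int_cases zle_iff_zadd add_0 less_le not_le nonneg_eq_int minus_minus zero_le_imp_eq_int neg_0_le_iff_le)
  have "EE (-a) oo SS = ((EE 1 oo SS) ^ n :: 'a fps)"
    by (simp add: a fps_compose_power EE_pow)
  also have "\<dots> = (EE a :: 'a fps)"
    by (simp add: EE1_compose EE_pow a)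
  finally have h: "EE (-a) oo SS = (EE a :: 'a fps)" .
  have "(EE a oo SS) = (EE a oo SS) * (EE a * EE (-a) :: 'a fps)"
    by (simp add: EE_inv)
  also have "\<dots> = ((EE a oo SS) * (EE (-a) oo SS)) * EE (-a)"
    by (subst h) (rule mult.assoc[symmetric])
  also have "\<dots> = EE (-a)"
    by (simp add: EE_compose_inv)
  finally show ?thesis .
qed

lemma SS_SS: "SS oo SS = (fps_X :: 'a::field_char_0 fps)"
proof -
  have "SS oo SS = - (SS * (EE (-1) oo SS) :: 'a fps)"
    by (simp add: SS_def fps_compose_mult_distrib fps_compose_uminus)
  also have "\<dots> = fps_X * (EE (-1) * EE 1)"
    using EE_compose[of "-1", where 'a='a] by (simp add: SS_def)
  finally show ?thesis by (simp add: EE_add[symmetric])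
qed

definition PhiF :: "int \<Rightarrow> 'a::field_char_0 fps \<Rightarrow> 'a fps" where
  "PhiF r G = EE (-r) * (G oo SS)"

lemma PhiF_invol: "PhiF r (PhiF r G) = G"
proof -
  have "PhiF r (PhiF r G) = EE (-r) * ((EE (-r) oo SS) * ((G oo SS) oo SS))"
    by (simp add: PhiF_def fps_compose_mult_distrib)
  also have "(G oo SS) oo SS = G"
    by (simp add: fps_compose_assoc[symmetric] SS_SS)
  finally show ?thesis
    by (simp add: EE_compose mult.assoc[symmetric] EE_add[symmetric])
qed

lemma PhiF_diff: "PhiF r (G - H) = PhiF r G - PhiF r H"
  by (simp add: PhiF_def fps_compose_sub_distrib algebra_simps)



lemma SS_pow_nth:
  "((SS::'a::field_char_0 fps) ^ j) $ i = (if j \<le> i then (-1)^j * EE (- int j) $ (i - j) else 0)"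
proof -
  have "(SS::'a fps) ^ j = fps_const ((-1)^j) * (fps_X ^ j * EE (- int j))"
    by (simp add: SS_pow mult.assoc flip: fps_const_neg fps_const_power)
  then show ?thesis by (simp add: fps_X_power_mult_nth)
qed

lemma gchoose_neg_shift:
  assumes "j \<le> n"
  shows "(-1)^(n-j) * ((of_int (- int j - r) :: 'a::field_char_0) gchoose (n - j))
         = of_int (int n + r - 1) gchoose (n - j)"
proof -
  have e: "(of_nat (n - j) - of_int (- int j - r) - 1 :: 'a) = of_int (int n + r - 1)"
    using assms by (simp add: of_nat_diff)
  have "((of_int (- int j - r) :: 'a) gchoose (n - j)) = (-1)^(n-j) * (of_int (int n + r - 1) gchoose (n - j))"
    by (subst gbinomial_negated_upper) (simp only: e)
  then show ?thesis by (simp add: mult.assoc[symmetric] power_add[symmetric])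
qed

lemma PhiF_nth: "PhiF r G $ n = Phi r (\<lambda>k. G $ k) (n::nat)"
proof -
  have cnth: "(G oo SS) $ i = (\<Sum>j=0..n. G $ j * ((SS::'a fps) ^ j) $ i)" if "i \<le> n" for i
  proof -
    have "(G oo SS) $ i = (\<Sum>j=0..i. G $ j * ((SS::'a fps) ^ j) $ i)"
      by (simp add: fps_compose_nth)
    also have "\<dots> = (\<Sum>j=0..n. G $ j * ((SS::'a fps) ^ j) $ i)"
      using that by (intro sum.mono_neutral_left) (auto simp: SS_pow_nth)
    finally show ?thesis .
  qed
  have "PhiF r G $ n = ((G oo SS) * EE (-r)) $ n"
    by (simp add: PhiF_def mult.commute)
  also have "\<dots> = (\<Sum>i=0..n. (\<Sum>j=0..n. G $ j * ((SS::'a fps) ^ j) $ i) * EE (-r) $ (n - i))"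
    by (simp add: fps_mult_nth cnth)
  also have "\<dots> = (\<Sum>i=0..n. \<Sum>j=0..n. G $ j * ((SS::'a fps) ^ j) $ i * EE (-r) $ (n - i))"
    by (simp only: sum_distrib_right)
  also have "\<dots> = (\<Sum>j=0..n. \<Sum>i=0..n. G $ j * ((SS::'a fps) ^ j) $ i * EE (-r) $ (n - i))"
    by (rule sum.swap)
  also have "\<dots> = (\<Sum>j=0..n. G $ j * (\<Sum>i=0..n. (SS ^ j) $ i * EE (-r) $ (n - i)))"
    by (simp only: sum_distrib_left mult.assoc)
  also have "\<dots> = (\<Sum>j=0..n. G $ j * (SS ^ j * EE (-r)) $ n)"
    by (simp add: fps_mult_nth)
  also have "\<dots> = (\<Sum>j=0..n. G $ j * ((-1)^j * (of_int (int n + r - 1) gchoose (n - j))))"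
  proof (rule sum.cong[OF refl])
    fix j assume j: "j \<in> {0..n}"
    have "SS ^ j * EE (-r) = fps_const ((-1)^j) * (fps_X ^ j * EE (- int j - r) :: 'a fps)"
      by (simp add: SS_pow mult.assoc EE_add[symmetric] flip: fps_const_neg fps_const_power)
    then have "(SS ^ j * EE (-r)) $ n = (-1)^j * ((-1)^(n-j) * ((of_int (- int j - r) :: 'a) gchoose (n - j)))"
      using j by (simp add: fps_X_power_mult_nth EE_nth)
    also have "\<dots> = (-1)^j * (of_int (int n + r - 1) gchoose (n - j))"
      using j gchoose_neg_shift[of j n r] by simp
    finally show "G $ j * (SS ^ j * EE (-r)) $ n = G $ j * ((-1)^j * (of_int (int n + r - 1) gchoose (n - j)))"
      by simp
  qed
  finally show ?thesis by (simp add: Phi_def mult_ac)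
qed


definition VV :: "int \<Rightarrow> 'a::field_char_0 fls" where
  "VV k = fps_to_fls (EE k)"

lemma VV_add: "VV (a + b) = (VV a * VV b :: 'a::field_char_0 fls)"
  by (simp add: VV_def EE_add fls_times_fps_to_fls)

lemma VV_0 [simp]: "VV 0 = 1"
  by (simp add: VV_def)

lemma VV_inv: "VV a * VV (-a) = (1 :: 'a::field_char_0 fls)"
  using VV_add[of a "-a"] by simp

lemma VV_nz: "VV a \<noteq> (0 :: 'a::field_char_0 fls)"
  using VV_inv[of a] by (metis mult_zero_left zero_neq_one)

lemma VV_pow: "VV a ^ n = (VV (a * int n) :: 'a::field_char_0 fls)"
  by (induction n) (simp_all add: VV_add[symmetric] algebra_simps)

lemma VV_inverse: "inverse (VV a) = (VV (-a) :: 'a::field_char_0 fls)"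
  using VV_inv[of a] by (metis inverse_unique)

lemma VV_powi: "VV a powi m = (VV (a * m) :: 'a::field_char_0 fls)"
proof (cases "m \<ge> 0")
  case True
  then obtain n where "m = int n" by (metis nonneg_eq_int)
  then show ?thesis by (simp add: VV_pow)
next
  case False
  define n where "n = nat (- m)"
  have m: "m = - int n" using False by (simp add: n_def)
  then show ?thesis by (simp add: power_int_minus VV_pow VV_inverse)
qed

lemma VV_1: "fps_to_fls (1 - fps_X) = (VV 1 :: 'a::field_char_0 fls)"
  by (simp add: VV_def EE_1)

lemma SS_fls: "fps_to_fls SS = (- fls_X * VV (-1) :: 'a::field_char_0 fls)"
  by (simp add: SS_def VV_def fls_times_fps_to_fls)

lemma compose_H:
  fixes \<gamma> :: "nat \<Rightarrow> 'a::field_char_0"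
  shows "fls_compose_fps (H_ser d \<gamma>) u_inv_sub
    = ((-1)^d * fls_X powi (- int d)) * VV (int d) * fps_to_fls (Abs_fps \<gamma> oo SS)"
proof -
  have s: "u_inv_sub = (SS :: 'a fps)" by (simp add: SS_eq)
  have "fls_compose_fps (H_ser d \<gamma>) u_inv_sub
      = fls_compose_fps (fls_X powi (- int d)) SS * fls_compose_fps (fps_to_fls (Abs_fps \<gamma>)) SS"
    unfolding H_ser_def s by (rule fls_compose_fps_mult) (simp_all add: SS_nz)
  also have "fls_compose_fps (fls_X powi (- int d)) SS = (fps_to_fls SS) powi (- int d)"
    by (subst fls_compose_fps_powi) (simp_all add: SS_nz)
  also have "fls_compose_fps (fps_to_fls (Abs_fps \<gamma>)) SS = fps_to_fls (Abs_fps \<gamma> oo SS)"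
    by (rule fls_compose_fps_to_fls) (simp_all add: SS_nz)
  also have "(fps_to_fls SS :: 'a fls) powi (- int d) = ((-1) * fls_X * VV (-1)) powi (- int d)"
    by (simp add: SS_fls)
  also have "\<dots> = (-1) powi (- int d) * fls_X powi (- int d) * VV (-1) powi (- int d)"
    by (simp only: power_int_mult_distrib)
  also have "(-1 :: 'a fls) powi (- int d) = (-1)^d"
    by (simp add: power_int_minus flip: power_inverse)
  also have "VV (-1) powi (- int d) = (VV (int d) :: 'a fls)"
    by (simp add: VV_powi)
  finally show ?thesis by simp
qed

lemma func_eq_iff_PhiF:
  fixes \<gamma> :: "nat \<Rightarrow> 'a::field_char_0"
  shows "func_eq d a \<gamma> \<longleftrightarrow> PhiF (- (a + int d)) (Abs_fps \<gamma>) = Abs_fps \<gamma>"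
proof -
  define c :: "'a fls" where "c = (-1)^d * fls_X powi (- int d)"
  define F1 where "F1 = (fps_to_fls (Abs_fps \<gamma> oo SS) :: 'a fls)"
  define F2 where "F2 = (fps_to_fls (Abs_fps \<gamma>) :: 'a fls)"
  have cnz: "c \<noteq> 0" by (simp add: c_def fls_shift_eq0_iff)
  have u: "(fps_to_fls (1 - fps_X) :: 'a fls) powi (-a) = VV (-a)"
    by (simp only: VV_1 VV_powi) simp
  have rhs: "(-1) ^ d * (fps_to_fls (1 - fps_X)) powi (- a) * H_ser d \<gamma> = c * (VV (-a) * F2)"
    unfolding u by (simp add: c_def F2_def H_ser_def mult_ac)
  have "func_eq d a \<gamma> \<longleftrightarrow> c * VV (int d) * F1 = c * (VV (-a) * F2)"
    unfolding func_eq_def compose_H rhs by (simp add: c_def F1_def)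
  also have "\<dots> \<longleftrightarrow> VV (int d) * F1 = VV (-a) * F2"
    using cnz by (simp add: mult.assoc)
  also have "\<dots> \<longleftrightarrow> VV a * (VV (int d) * F1) = VV a * (VV (-a) * F2)"
    using VV_nz[of a, where 'a='a] by simp
  also have "\<dots> \<longleftrightarrow> VV (a + int d) * F1 = F2"
    by (simp add: VV_add mult.assoc[symmetric] VV_inv)
  also have "\<dots> \<longleftrightarrow> fps_to_fls (PhiF (- (a + int d)) (Abs_fps \<gamma>)) = F2"
    by (simp add: PhiF_def VV_def F1_def fls_times_fps_to_fls add.commute)
  also have "\<dots> \<longleftrightarrow> PhiF (- (a + int d)) (Abs_fps \<gamma>) = Abs_fps \<gamma>"
    by (simp add: F2_def)
  finally show ?thesis .
qed



definition gCi :: "int \<Rightarrow> int \<Rightarrow> 'a::field_char_0" where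
  "gCi x y = (if y < 0 then 0 else of_int x gchoose nat y)"

definition Lw :: "int \<Rightarrow> nat \<Rightarrow> (nat \<Rightarrow> 'a::field_char_0) \<Rightarrow> (nat \<Rightarrow> 'a) \<Rightarrow> 'a" where
  "Lw base len w g = (\<Sum>i=0..len. w i * gam g (base + int i))"

definition Anti :: "int \<Rightarrow> int \<Rightarrow> nat \<Rightarrow> (nat \<Rightarrow> 'a::field_char_0) \<Rightarrow> bool" where
  "Anti r base len w \<longleftrightarrow> (\<forall>j::nat.
     (\<Sum>i=0..len. w i * (-1)^j * gCi (base + int i + r - 1) (base + int i - int j))
       = - (if base \<le> int j \<and> int j \<le> base + int len then w (nat (int j - base)) else 0))"

lemma gam_Phi:
  fixes g :: "nat \<Rightarrow> 'a::field_char_0"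
  assumes "x \<le> int J"
  shows "gam (Phi r g) x = (\<Sum>j=0..J. (-1)^j * gCi (x + r - 1) (x - int j) * g j)"
proof (cases "x < 0")
  case True
  then show ?thesis by (simp add: gam_def gCi_def)
next
  case False
  define n where "n = nat x"
  have x: "x = int n" using False by (simp add: n_def)
  have nJ: "n \<le> J" using assms x by simp
  have "gam (Phi r g) x = (\<Sum>j=0..n. (-1)^j * (of_int (int n + r - 1) gchoose (n - j)) * g j)"
    by (simp add: gam_def x Phi_def)
  also have "\<dots> = (\<Sum>j=0..n. (-1)^j * gCi (x + r - 1) (x - int j) * g j)"
    by (rule sum.cong) (auto simp: gCi_def x nat_diff_distrib)
  also have "\<dots> = (\<Sum>j=0..J. (-1)^j * gCi (x + r - 1) (x - int j) * g j)"
    using nJ by (intro sum.mono_neutral_left) (auto simp: gCi_def x)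
  finally show ?thesis .
qed

lemma reindex_Lw:
  fixes g :: "nat \<Rightarrow> 'a::field_char_0"
  assumes "base + int len \<le> int J"
  shows "(\<Sum>j=0..J. (if base \<le> int j \<and> int j \<le> base + int len then w (nat (int j - base)) else 0) * g j)
         = Lw base len w g"
proof -
  have "(\<Sum>j=0..J. (if base \<le> int j \<and> int j \<le> base + int len then w (nat (int j - base)) else 0) * g j)
      = (\<Sum>j\<in>{j\<in>{0..J}. base \<le> int j \<and> int j \<le> base + int len}. w (nat (int j - base)) * g j)"
  proof -
    have "(\<Sum>j=0..J. (if base \<le> int j \<and> int j \<le> base + int len then w (nat (int j - base)) else 0) * g j)
      = (\<Sum>j\<in>{0..J}. if base \<le> int j \<and> int j \<le> base + int len then w (nat (int j - base)) * g j else 0)"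
      by (rule sum.cong) auto
    then show ?thesis by (simp only: sum.inter_filter[OF finite_atLeastAtMost])
  qed
  also have "\<dots> = (\<Sum>i\<in>{i\<in>{0..len}. 0 \<le> base + int i}. w i * g (nat (base + int i)))"
    using assms
    by (intro sum.reindex_bij_witness[where j="\<lambda>j. nat (int j - base)" and i="\<lambda>i. nat (base + int i)"]) auto
  also have "\<dots> = Lw base len w g"
  proof -
    have "(\<Sum>i\<in>{i\<in>{0..len}. 0 \<le> base + int i}. w i * g (nat (base + int i)))
       = (\<Sum>i\<in>{0..len}. if 0 \<le> base + int i then w i * g (nat (base + int i)) else 0)"
      by (simp only: sum.inter_filter[OF finite_atLeastAtMost])
    also have "\<dots> = Lw base len w g"
      unfolding Lw_def by (rule sum.cong) (auto simp: gam_def)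
    finally show ?thesis .
  qed
  finally show ?thesis .
qed

lemma Lw_Phi:
  fixes g :: "nat \<Rightarrow> 'a::field_char_0"
  assumes "Anti r base len w"
  shows "Lw base len w (Phi r g) = - Lw base len w g"
proof -
  define J where "J = nat (base + int len)"
  have J: "base + int len \<le> int J" by (simp add: J_def)
  have "Lw base len w (Phi r g)
     = (\<Sum>i=0..len. w i * (\<Sum>j=0..J. (-1)^j * gCi (base + int i + r - 1) (base + int i - int j) * g j))"
    unfolding Lw_def using J by (intro sum.cong refl) (simp add: gam_Phi)
  also have "\<dots> = (\<Sum>i=0..len. \<Sum>j=0..J. w i * ((-1)^j * gCi (base + int i + r - 1) (base + int i - int j) * g j))"
    by (simp only: sum_distrib_left)
  also have "\<dots> = (\<Sum>j=0..J. \<Sum>i=0..len. w i * ((-1)^j * gCi (base + int i + r - 1) (base + int i - int j) * g j))"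
    by (rule sum.swap)
  also have "\<dots> = (\<Sum>j=0..J. (\<Sum>i=0..len. w i * (-1)^j * gCi (base + int i + r - 1) (base + int i - int j)) * g j)"
    by (simp only: sum_distrib_right mult.assoc)
  also have "\<dots> = (\<Sum>j=0..J. - ((if base \<le> int j \<and> int j \<le> base + int len then w (nat (int j - base)) else 0) * g j))"
    using assms unfolding Anti_def by (intro sum.cong refl) simp
  also have "\<dots> = - Lw base len w g"
    by (simp only: sum_negf reindex_Lw[OF J])
  finally show ?thesis .
qed

lemma Lw_diff:
  "Lw base len w (\<lambda>n. f n - g n) = Lw base len w f - (Lw base len w g :: 'a::field_char_0)"
  unfolding Lw_def sum_subtractf[symmetric] by (rule sum.cong) (auto simp: gam_def algebra_simps)

lemma Lw_top:
  fixes g :: "nat \<Rightarrow> 'a::field_char_0"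
  assumes "\<And>k. k < n \<Longrightarrow> g k = 0" and "base + int len = int n"
  shows "Lw base len w g = w len * g n"
proof -
  have "Lw base len w g = (\<Sum>i\<in>insert len {0..<len}. w i * gam g (base + int i))"
    unfolding Lw_def by (rule sum.cong) auto
  also have "\<dots> = w len * gam g (base + int len) + (\<Sum>i=0..<len. w i * gam g (base + int i))"
    by simp
  also have "(\<Sum>i=0..<len. w i * gam g (base + int i)) = 0"
  proof (rule sum.neutral, rule ballI)
    fix i assume "i \<in> {0..<len}"
    then have "base + int i < int n" using assms(2) by simp
    then show "w i * gam g (base + int i) = 0"
      using assms(1)[of "nat (base + int i)"] by (auto simp: gam_def)
  qed
  finally show ?thesis using assms(2) by (simp add: gam_def)
qed


definition cz :: "nat \<Rightarrow> int \<Rightarrow> 'a::field_char_0" where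
  "cz n k = (if k < 0 then 0 else of_nat (n choose nat k))"

lemma cz_sym: "cz n k = (cz n (int n - k) :: 'a::field_char_0)"
proof -
  consider "k < 0" | "k > int n" | "0 \<le> k" "k \<le> int n" by linarith
  then show ?thesis
  proof cases
    case 1 then show ?thesis by (simp add: cz_def)
  next
    case 2 then show ?thesis by (simp add: cz_def)
  next
    case 3
    then have "n choose nat k = n choose (n - nat k)"
      by (intro binomial_symmetric) linarith
    moreover have "nat (int n - k) = n - nat k" using 3 by linarith
    ultimately show ?thesis using 3 by (simp add: cz_def)
  qed
qed

lemma cz_pascal: "cz (Suc x) k = cz x k + (cz x (k - 1) :: 'a::field_char_0)"
proof (cases "k \<le> 0")
  case True
  then show ?thesis by (cases "k = 0") (auto simp: cz_def)
next
  case False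
  define t where "t = nat (k - 1)"
  have k1: "nat k = Suc t" and k2: "nat (k - 1) = t" and k3: "\<not> k < 0" and k4: "\<not> k - 1 < 0"
    using False by (simp_all add: t_def)
  show ?thesis by (simp only: cz_def k1 k2 k3 k4 if_False binomial_Suc_Suc of_nat_add add.commute)
qed

lemma gCi_nat: "gCi (int n) k = (cz n k :: 'a::field_char_0)"
  by (simp add: gCi_def cz_def binomial_gbinomial)

lemma V_ident:
  "(\<Sum>i=0..p. (-1)^i * of_nat (p choose i) * cz (x + i) y)
     = (-1)^p * (cz x (y - int p) :: 'a::field_char_0)"
proof (induction p arbitrary: x y)
  case 0
  then show ?case by simp
next
  case (Suc p)
  define f where "f = (\<lambda>x i. (-1)^i * of_nat (p choose i) * (cz (x + i) y :: 'a))"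
  have split: "(-1)^i * of_nat (Suc p choose i) * cz (x + i) y
      = f x i + (if i = 0 then 0 else - f (Suc x) (i - 1))" for i
    by (cases i) (simp_all add: f_def algebra_simps)
  have "(\<Sum>i=0..Suc p. (-1)^i * of_nat (Suc p choose i) * (cz (x + i) y :: 'a))
      = (\<Sum>i=0..Suc p. f x i) + (\<Sum>i=0..Suc p. (if i = 0 then 0 else - f (Suc x) (i - 1)))"
    by (simp add: split sum.distrib)
  also have "(\<Sum>i=0..Suc p. f x i) = (\<Sum>i=0..p. f x i)"
    by (simp add: f_def)
  also have "(\<Sum>i=0..Suc p. (if i = 0 then 0 else - f (Suc x) (i - 1))) = - (\<Sum>i=0..p. f (Suc x) i)"
    by (subst sum.atLeast0_atMost_Suc_shift) (simp add: sum_negf)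
  also have "(\<Sum>i=0..p. f x i) = (-1)^p * cz x (y - int p)"
    using Suc.IH by (simp add: f_def)
  also have "(\<Sum>i=0..p. f (Suc x) i) = (-1)^p * cz (Suc x) (y - int p)"
    using Suc.IH[of "Suc x" y] by (simp add: f_def)
  finally show ?case
    by (simp add: cz_pascal algebra_simps)
qed


lemma neg1_odd: "odd (a + b) \<Longrightarrow> (-1::'a::ring_1) ^ a = - ((-1) ^ b)"
  by (cases "even a") auto

lemma neg1_even: "even (a + b) \<Longrightarrow> (-1::'a::ring_1) ^ a = (-1) ^ b"
  by (cases "even a") auto

lemma cz_neg: "k < 0 \<Longrightarrow> cz n k = 0"
  by (simp add: cz_def)

lemma cz_nat: "cz n (int t) = of_nat (n choose t)"
  by (simp add: cz_def)

lemma Anti_A: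
  fixes r :: int and m :: nat
  assumes r: "even r" and m: "m \<ge> 1"
  shows "Anti r (int m - r) (m - 1) (\<lambda>i. (-1)^i * of_nat ((m-1) choose i) :: 'a::field_char_0)"
  unfolding Anti_def
proof (intro allI)
  fix j :: nat
  define p where "p = m - 1"
  define q where "q = int m - r - int j"
  have trm: "(-1)^i * of_nat ((m-1) choose i) * (-1)^j * gCi (int m - r + int i + r - 1) (int m - r + int i - int j)
      = (-1)^j * ((-1)^i * of_nat (p choose i) * (cz (p + i) (int p - q) :: 'a))" for i
  proof -
    have e1: "int m - r + int i + r - 1 = int (p + i)" using m by (simp add: p_def)
    have e2: "int m - r + int i - int j = q + int i" by (simp add: q_def)
    have "gCi (int m - r + int i + r - 1) (int m - r + int i - int j) = (cz (p+i) (q + int i) :: 'a)"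
      by (simp only: e1 e2 gCi_nat)
    also have "\<dots> = cz (p+i) (int p - q)" by (subst cz_sym) simp
    finally show ?thesis by (simp add: p_def)
  qed
  have lhs: "(\<Sum>i=0..m-1. (-1)^i * of_nat ((m-1) choose i) * (-1)^j * gCi (int m - r + int i + r - 1) (int m - r + int i - int j))
      = (-1)^j * ((-1)^p * (cz p (- q) :: 'a))"
  proof -
    have "(\<Sum>i=0..m-1. (-1)^i * of_nat ((m-1) choose i) * (-1)^j * gCi (int m - r + int i + r - 1) (int m - r + int i - int j))
        = (\<Sum>i=0..p. (-1)^j * ((-1)^i * of_nat (p choose i) * (cz (p + i) (int p - q) :: 'a)))"
      unfolding p_def by (rule sum.cong[OF refl]) (simp only: trm p_def)
    also have "\<dots> = (-1)^j * ((-1)^p * (cz p (int p - q - int p) :: 'a))"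
      by (simp only: sum_distrib_left[symmetric] V_ident)
    finally show ?thesis by simp
  qed
  show "(\<Sum>i=0..m-1. (-1)^i * of_nat ((m-1) choose i) * (-1)^j * gCi (int m - r + int i + r - 1) (int m - r + int i - int j))
      = - (if int m - r \<le> int j \<and> int j \<le> int m - r + int (m - 1)
           then (-1)^nat (int j - (int m - r)) * of_nat ((m-1) choose nat (int j - (int m - r))) else (0::'a))"
  proof (cases "q > 0")
    case True
    then show ?thesis unfolding lhs by (simp add: cz_neg q_def)
  next
    case False
    define t where "t = nat (- q)"
    have jt: "int j - (int m - r) = int t" using False by (simp add: t_def q_def)
    have mq: "- q = int t" using False by (simp add: t_def)
    have sgn0: "(-1::'a)^j * (-1)^p = - ((-1)^t)"
    proof -
      have "odd (j + p + t)" using jt m r unfolding p_def by presburger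
      then show ?thesis by (simp add: power_add[symmetric] neg1_odd)
    qed
    have sgn: "(-1::'a)^j * ((-1)^(m-1) * x) = - ((-1)^t * x)" for x
      using sgn0 unfolding p_def by (simp add: mult.assoc[symmetric])
    show ?thesis
    proof (cases "t \<le> p")
      case True
      then show ?thesis unfolding lhs mq using jt m
        using sgn by (simp add: cz_nat p_def)
    next
      case False
      then show ?thesis unfolding lhs mq using jt m
        by (simp add: cz_nat p_def)
    qed
  qed
qed

lemma wD_split:
  assumes "m \<ge> 1"
  shows "of_nat (m choose i) * (of_nat (m + i) / of_nat m)
         = of_nat (m choose i) + (if i = 0 then 0 else of_nat ((m - 1) choose (i - 1)) :: 'a::field_char_0)"
proof (cases i)
  case 0 then show ?thesis using assms by simp
next
  case (Suc i')
  obtain m' where m: "m = Suc m'" using assms by (cases m) auto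
  have ab: "of_nat (Suc i') * (of_nat (m choose Suc i') :: 'a) = of_nat m * of_nat (m' choose i')"
    using Suc_times_binomial[of i' m'] unfolding m by (metis of_nat_mult)
  have "of_nat (m choose i) * (of_nat (m + i) / of_nat m)
      = (of_nat (m choose i) :: 'a) + of_nat i * of_nat (m choose i) / of_nat m"
    using assms by (simp add: field_simps)
  also have "of_nat i * of_nat (m choose i) / of_nat m = (of_nat (m' choose i') :: 'a)"
    using ab assms unfolding Suc by (simp add: field_simps)
  finally show ?thesis by (simp add: Suc m)
qed

lemma cz_minus1: "cz n (int t - 1) = (if t = 0 then 0 else (of_nat (n choose (t - 1)) :: 'a::field_char_0))"
proof (cases t)
  case 0 then show ?thesis by (simp add: cz_def)
next
  case (Suc t') then show ?thesis by (simp add: cz_def)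
qed

lemma Anti_D:
  fixes r :: int and m :: nat
  assumes r: "odd r" and m: "m \<ge> 1"
  shows "Anti r (int m - r) m (\<lambda>i. (-1)^i * of_nat (m choose i) * (of_nat (m + i) / of_nat m) :: 'a::field_char_0)"
  unfolding Anti_def
proof (intro allI)
  fix j :: nat
  define q where "q = int m - r - int j"
  define y where "y = int (m - 1) - q"
  obtain m' where m': "m = Suc m'" using m by (cases m) auto
  define w where "w = (\<lambda>i. (-1)^i * of_nat (m choose i) * (of_nat (m + i) / of_nat m) :: 'a)"
  have trm: "w i * (-1)^j * gCi (int m - r + int i + r - 1) (int m - r + int i - int j)
      = (-1)^j * ((-1)^i * of_nat (m choose i) * cz (m - 1 + i) y
          + (if i = 0 then 0 else (-1)^i * of_nat ((m - 1) choose (i - 1)) * cz (m - 1 + i) y))" for i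
  proof -
    have e1: "int m - r + int i + r - 1 = int (m - 1 + i)" using m by simp
    have e2: "int m - r + int i - int j = q + int i" by (simp add: q_def)
    have "gCi (int m - r + int i + r - 1) (int m - r + int i - int j) = (cz (m - 1 + i) (q + int i) :: 'a)"
      by (simp only: e1 e2 gCi_nat)
    also have "\<dots> = cz (m - 1 + i) y" by (subst cz_sym) (simp add: y_def m')
    finally have g: "gCi (int m - r + int i + r - 1) (int m - r + int i - int j) = (cz (m - 1 + i) y :: 'a)" .
    have wi: "w i = (-1)^i * (of_nat (m choose i) + (if i = 0 then 0 else of_nat ((m - 1) choose (i - 1))))"
      unfolding w_def by (simp only: mult.assoc wD_split[OF m])
    show ?thesis unfolding g wi by (cases "i = 0") (simp_all add: algebra_simps)
  qed
  have S1: "(\<Sum>i=0..m. (-1)^i * of_nat (m choose i) * cz (m - 1 + i) y) = (-1)^m * (cz (m - 1) (-1 - q) :: 'a)"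
  proof -
    have "y - int m = -1 - q" by (simp add: y_def m')
    then show ?thesis by (simp only: V_ident)
  qed
  have S2: "(\<Sum>i=0..m. (if i = 0 then 0 else (-1)^i * of_nat ((m - 1) choose (i - 1)) * cz (m - 1 + i) y))
      = - ((-1)^m' * (cz m (- q) :: 'a))"
  proof -
    have "(\<Sum>i=0..m. (if i = 0 then 0 else (-1)^i * of_nat ((m - 1) choose (i - 1)) * (cz (m - 1 + i) y :: 'a)))
        = (\<Sum>i=0..m'. (-1)^(Suc i) * of_nat (m' choose i) * cz (m + i) y)"
      unfolding m' by (subst sum.atLeast0_atMost_Suc_shift) simp
    also have "\<dots> = - (\<Sum>i=0..m'. (-1)^i * of_nat (m' choose i) * cz (m + i) y)"
      by (simp add: sum_negf[symmetric])
    also have "\<dots> = - ((-1)^m' * cz m (y - int m'))"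
      by (simp only: V_ident)
    finally show ?thesis by (simp add: y_def m')
  qed
  have lhs: "(\<Sum>i=0..m. w i * (-1)^j * gCi (int m - r + int i + r - 1) (int m - r + int i - int j))
      = (-1)^j * ((-1)^m * (cz (m - 1) (-1 - q) + cz m (- q)))"
    by (simp only: trm sum_distrib_left[symmetric] sum.distrib S1 S2) (simp add: m' algebra_simps)
  show "(\<Sum>i=0..m. w i * (-1)^j * gCi (int m - r + int i + r - 1) (int m - r + int i - int j))
      = - (if int m - r \<le> int j \<and> int j \<le> int m - r + int m then w (nat (int j - (int m - r))) else 0)"
  proof (cases "q > 0")
    case True
    then show ?thesis unfolding lhs by (simp add: cz_neg q_def)
  next
    case False
    define t where "t = nat (- q)"
    have jt: "int j - (int m - r) = int t" using False by (simp add: t_def q_def)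
    have mq: "- q = int t" and mq1: "-1 - q = int t - 1" using False by (simp_all add: t_def)
    have sgn0: "(-1::'a)^j * (-1)^m = - ((-1)^t)"
    proof -
      have "odd (j + m + t)" using jt m r by presburger
      then show ?thesis by (simp add: power_add[symmetric] neg1_odd)
    qed
    show ?thesis
    proof (cases "t \<le> m")
      case True
      have "w t = (-1)^t * (of_nat (m choose t) + (if t = 0 then 0 else of_nat ((m - 1) choose (t - 1))))"
        unfolding w_def by (simp only: mult.assoc wD_split[OF m])
      note wt = this
      have c: "int m - r \<le> int j \<and> int j \<le> int m - r + int m" using jt True by simp
      have n: "nat (int j - (int m - r)) = t" using jt by simp
      have "(-1)^j * ((-1)^m * (cz (m - 1) (int t - 1) + cz m (int t)))
          = - ((-1)^t * (of_nat (m choose t) + (if t = 0 then 0 else of_nat ((m - 1) choose (t - 1)))) :: 'a)"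
        by (simp only: cz_nat cz_minus1 mult.assoc[symmetric] sgn0) (simp add: algebra_simps)
      then show ?thesis unfolding lhs mq mq1 by (simp only: c n simp_thms if_True wt)
    next
      case False
      then show ?thesis unfolding lhs mq mq1 using jt m
        by (simp add: cz_nat cz_minus1 binomial_eq_0)
    qed
  qed
qed


lemma FB1:
  fixes i s e a1 R1 :: nat
  assumes that: "i + s + i = Suc a1 + e"
  shows "of_nat ((s + a1 + e + R1) choose s) * of_nat ((Suc a1 + e) choose i)
           * of_nat ((a1 + e + R1) choose e)
         = fact (s + a1 + e + R1) * fact (Suc a1) / (fact (R1 + a1) * fact (i + s) * fact (i + s))
           * of_nat ((i + s) choose i) * (of_nat ((Suc a1 + e) choose (Suc a1)) :: 'a::field_char_0)"
proof -
  have m: "Suc (a1 + e) - i = i + s" using that by simp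
  have b1: "of_nat ((s + a1 + e + R1) choose s) = (fact (s + a1 + e + R1) / (fact s * fact (a1 + e + R1)) :: 'a)"
    by (subst binomial_fact) (simp_all add: add.assoc)
  have b2: "of_nat ((Suc a1 + e) choose i) = (fact (Suc a1 + e) / (fact i * fact (i + s)) :: 'a)"
    using that by (subst binomial_fact) (simp_all add: m)
  have b3: "of_nat ((a1 + e + R1) choose e) = (fact (a1 + e + R1) / (fact e * fact (R1 + a1)) :: 'a)"
    by (subst binomial_fact) (simp_all add: add.commute add.left_commute)
  have b4: "of_nat ((i + s) choose i) = (fact (i + s) / (fact i * fact s) :: 'a)"
    by (subst binomial_fact) simp_all
  have b5: "of_nat ((Suc a1 + e) choose (Suc a1)) = (fact (Suc a1 + e) / (fact (Suc a1) * fact e) :: 'a)"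
    by (subst binomial_fact) simp_all
  show ?thesis unfolding b1 b2 b3 b4 b5 by (simp add: field_simps del: fact_Suc)
qed

lemma FB2:
  fixes t u j R1 :: nat
  assumes "Suc j = t + u + t"
  shows "fact (u + j + R1) * fact (Suc j) / (fact (R1 + j) * fact (t + u) * fact (t + u))
           * of_nat ((t + u) choose t)
         = of_nat ((u + j + R1) choose u) * (of_nat ((t + u + t) choose t) :: 'a::field_char_0)"
proof -
  have b1: "of_nat ((t + u) choose t) = (fact (t + u) / (fact t * fact u) :: 'a)"
    by (subst binomial_fact) simp_all
  have b2: "of_nat ((u + j + R1) choose u) = (fact (u + j + R1) / (fact u * fact (R1 + j)) :: 'a)"
    by (subst binomial_fact) (simp_all add: add.commute)
  have b3: "of_nat ((t + u + t) choose t) = (fact (Suc j) / (fact t * fact (t + u)) :: 'a)"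
    using assms by (subst binomial_fact) simp_all
  show ?thesis unfolding b1 b2 b3 by (simp add: field_simps del: fact_Suc)
qed

lemma FC1:
  fixes a b c :: nat
  shows "of_nat ((b + c) choose b) / of_nat ((a + b + c) choose (a + b))
         = fact (b + c) * fact a / fact (a + b + c) * (of_nat ((a + b) choose a) :: 'a::field_char_0)"
proof -
  have b1: "of_nat ((b + c) choose b) = (fact (b + c) / (fact b * fact c) :: 'a)"
    by (subst binomial_fact) simp_all
  have b2: "of_nat ((a + b + c) choose (a + b)) = (fact (a + b + c) / (fact (a + b) * fact c) :: 'a)"
    by (subst binomial_fact) simp_all
  have b3: "of_nat ((a + b) choose a) = (fact (a + b) / (fact a * fact b) :: 'a)"
    by (subst binomial_fact) simp_all
  show ?thesis unfolding b1 b2 b3 by (simp add: field_simps del: fact_Suc)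
qed

lemma FC2:
  fixes a d :: nat
  shows "fact d * fact a / fact (a + d) = 1 / (of_nat ((a + d) choose a) :: 'a::field_char_0)"
proof -
  have b1: "of_nat ((a + d) choose a) = (fact (a + d) / (fact a * fact d) :: 'a)"
    by (subst binomial_fact) simp_all
  show ?thesis unfolding b1 by (simp add: field_simps del: fact_Suc)
qed

lemma FB1':
  fixes m i j R1 N :: nat
  assumes "i \<le> m" "Suc j \<le> m + i" "N = 2 * m + R1 - 1" "m \<ge> 1"
  shows "of_nat (N choose (m - i)) * of_nat ((m + i) choose i) * of_nat ((m + i + R1 - 1) choose (m + i - Suc j))
       = fact N * fact (Suc j) / (fact (R1 + j) * fact m * fact m) * of_nat (m choose i)
         * (of_nat ((m + i) choose Suc j) :: 'a::field_char_0)"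
proof -
  obtain s where s: "m = i + s" using assms(1) by (metis le_add_diff_inverse)
  obtain e where e: "m + i = Suc j + e" using assms(2) by (metis le_add_diff_inverse)
  have g1: "N = s + j + e + R1" using assms(3) s e by simp
  have g2: "m - i = s" using s by simp
  have g3: "m + i + R1 - 1 = j + e + R1" using e by simp
  have g4: "m + i - Suc j = e" using e by simp
  have e': "i + s + i = Suc j + e" using s e by simp
  show ?thesis
    unfolding g1 g2 g3 g4 e unfolding s using FB1[OF e', where 'a='a] by simp
qed

lemma FB2':
  fixes m t j R1 N :: nat
  assumes "t \<le> m" "m + t = Suc j" "N = 2 * m + R1 - 1"
  shows "fact N * fact (Suc j) / (fact (R1 + j) * fact m * fact m) * of_nat (m choose t)
       = of_nat (N choose (m - t)) * (of_nat ((m + t) choose t) :: 'a::field_char_0)"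
proof -
  obtain u where u: "m = t + u" using assms(1) by (metis le_add_diff_inverse)
  have g1: "N = u + j + R1" using assms u by simp
  have g2: "m - t = u" using u by simp
  have e': "Suc j = t + u + t" using assms u by simp
  show ?thesis
    unfolding g1 g2 assms(2) unfolding u using FB2[OF e', where 'a='a, of R1] e' by simp
qed

lemma Anti_B:
  fixes r :: int and m :: nat
  assumes r: "odd r" "r > 0" and m: "m \<ge> 1"
  shows "Anti r (int m - 1) m (\<lambda>i. (-1)^i * of_nat (nat (2 * int m + r - 2) choose (m - i))
            * of_nat ((m + i) choose i) :: 'a::field_char_0)"
  unfolding Anti_def
proof (intro allI)
  fix j :: nat
  define R1 where "R1 = nat (r - 1)"
  have rR: "r = int R1 + 1" using r by (simp add: R1_def)
  define N where "N = nat (2 * int m + r - 2)"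
  have N: "N = 2 * m + R1 - 1" using m by (simp add: N_def rR)
  define K where "K = (fact N * fact (Suc j) / (fact (R1 + j) * fact m * fact m) :: 'a)"
  define w where "w = (\<lambda>i. (-1)^i * of_nat (N choose (m - i)) * of_nat ((m + i) choose i) :: 'a)"
  have trm: "w i * (-1)^j * gCi (int m - 1 + int i + r - 1) (int m - 1 + int i - int j)
      = (-1)^j * (K * ((-1)^i * of_nat (m choose i) * cz (m + i) (int (Suc j))))" if "i \<in> {0..m}" for i
  proof -
    have e1: "int m - 1 + int i + r - 1 = int (m + i + R1 - 1)" using m by (simp add: rR)
    have g: "gCi (int m - 1 + int i + r - 1) (int m - 1 + int i - int j) = (cz (m + i + R1 - 1) (int m - 1 + int i - int j) :: 'a)"
      by (simp only: e1 gCi_nat)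
    show ?thesis
    proof (cases "Suc j \<le> m + i")
      case False
      have "nat (1 + int j) = Suc j" by simp
      then show ?thesis unfolding g using False by (simp add: cz_def)
    next
      case True
      have h1: "int m - 1 + int i - int j = int (m + i - Suc j)" using True by simp
      have h2: "cz (m + i) (int (Suc j)) = (of_nat ((m + i) choose Suc j) :: 'a)" by (simp only: cz_nat)
      have "w i * (gCi (int m - 1 + int i + r - 1) (int m - 1 + int i - int j) :: 'a)
          = (-1)^i * (of_nat (N choose (m - i)) * of_nat ((m + i) choose i) * of_nat ((m + i + R1 - 1) choose (m + i - Suc j)))"
      proof -
        have g': "gCi (int m - 1 + int i + r - 1) (int m - 1 + int i - int j) = (of_nat ((m + i + R1 - 1) choose (m + i - Suc j)) :: 'a)"
          by (simp only: e1 h1 gCi_nat cz_nat)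
        show ?thesis unfolding g' w_def by (simp add: mult_ac)
      qed
      also have "\<dots> = (-1)^i * (K * of_nat (m choose i) * of_nat ((m + i) choose Suc j))"
        using that True N m unfolding K_def by (subst FB1') simp_all
      finally have "w i * (gCi (int m - 1 + int i + r - 1) (int m - 1 + int i - int j) :: 'a)
          = (-1)^i * (K * of_nat (m choose i) * of_nat ((m + i) choose Suc j))" .
      then show ?thesis unfolding h2 by (simp add: mult_ac)
    qed
  qed
  have lhs: "(\<Sum>i=0..m. w i * (-1)^j * gCi (int m - 1 + int i + r - 1) (int m - 1 + int i - int j))
      = (-1)^j * (K * ((-1)^m * cz m (int (Suc j) - int m)))"
  proof -
    have "(\<Sum>i=0..m. w i * (-1)^j * gCi (int m - 1 + int i + r - 1) (int m - 1 + int i - int j))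
        = (\<Sum>i=0..m. (-1)^j * (K * ((-1)^i * of_nat (m choose i) * cz (m + i) (int (Suc j)))))"
      by (rule sum.cong[OF refl]) (rule trm)
    also have "\<dots> = (-1)^j * (K * (\<Sum>i=0..m. (-1)^i * of_nat (m choose i) * cz (m + i) (int (Suc j))))"
      by (simp only: sum_distrib_left)
    also have "\<dots> = (-1)^j * (K * ((-1)^m * cz m (int (Suc j) - int m)))"
      by (simp only: V_ident)
    finally show ?thesis .
  qed
  show "(\<Sum>i=0..m. (-1)^i * of_nat (nat (2 * int m + r - 2) choose (m - i)) * of_nat ((m + i) choose i) * (-1)^j
           * gCi (int m - 1 + int i + r - 1) (int m - 1 + int i - int j))
      = - (if int m - 1 \<le> int j \<and> int j \<le> int m - 1 + int m
           then (-1)^nat (int j - (int m - 1)) * of_nat (nat (2 * int m + r - 2) choose (m - nat (int j - (int m - 1))))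
              * of_nat ((m + nat (int j - (int m - 1))) choose nat (int j - (int m - 1))) else (0::'a))"
  proof -
    have L: "(\<Sum>i=0..m. (-1)^i * of_nat (nat (2 * int m + r - 2) choose (m - i)) * of_nat ((m + i) choose i) * (-1)^j
           * gCi (int m - 1 + int i + r - 1) (int m - 1 + int i - int j))
         = (-1)^j * (K * ((-1)^m * cz m (int (Suc j) - int m)))"
      using lhs unfolding w_def N_def .
    show ?thesis
    proof (cases "Suc j < m")
      case True
      then show ?thesis unfolding L by (simp add: cz_def)
    next
      case False
      define t where "t = Suc j - m"
      have jt: "int j - (int m - 1) = int t" and mt: "m + t = Suc j" using False by (simp_all add: t_def)
      have ct: "int (Suc j) - int m = int t" using False by (simp add: t_def)
      show ?thesis
      proof (cases "t \<le> m")
        case False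
        then show ?thesis unfolding L ct using jt by (simp add: cz_nat binomial_eq_0)
      next
        case True
        have sgn0: "(-1::'a)^j * (-1)^m = - ((-1)^t)"
        proof -
          have "odd (j + m + t)" using mt by presburger
          then show ?thesis by (simp add: power_add[symmetric] neg1_odd)
        qed
        have c: "int m - 1 \<le> int j \<and> int j \<le> int m - 1 + int m" using jt True by simp
        have key: "K * of_nat (m choose t) = of_nat (N choose (m - t)) * (of_nat ((m + t) choose t) :: 'a)"
          unfolding K_def using True mt N by (intro FB2') simp_all
        have "(-1)^j * (K * ((-1)^m * cz m (int t))) = - ((-1)^t * (of_nat (N choose (m - t)) * (of_nat ((m + t) choose t) :: 'a)))"
          unfolding cz_nat key[symmetric] using sgn0 by (simp add: algebra_simps)
        then show ?thesis unfolding L ct jt using c by (simp add: N_def mult.assoc)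
      qed
    qed
  qed
qed


lemma FC1':
  fixes n M j :: nat
  assumes "Suc j \<le> n" "n \<le> M"
  shows "of_nat ((M - Suc j) choose (n - Suc j)) / of_nat (M choose n)
       = fact (M - Suc j) * fact (Suc j) / fact M * (of_nat (n choose Suc j) :: 'a::field_char_0)"
proof -
  obtain b where b: "n = Suc j + b" using assms(1) by (metis le_add_diff_inverse)
  obtain c where c: "M = n + c" using assms(2) by (metis le_add_diff_inverse)
  have g1: "M - Suc j = b + c" using b c by simp
  have g2: "n - Suc j = b" using b by simp
  show ?thesis unfolding g1 g2 unfolding c b using FC1[of b c "Suc j", where 'a='a]
    by (simp add: add.assoc)
qed

lemma FC2':
  fixes M j :: nat
  assumes "Suc j \<le> M"
  shows "fact (M - Suc j) * fact (Suc j) / fact M = 1 / (of_nat (M choose Suc j) :: 'a::field_char_0)"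
proof -
  obtain d where d: "M = Suc j + d" using assms by (metis le_add_diff_inverse)
  show ?thesis unfolding d using FC2[of d "Suc j", where 'a='a] by simp
qed

lemma Anti_C:
  fixes r :: int and m :: nat
  assumes r: "r < 0" and m: "m \<ge> 1" and mM: "2 * int m \<le> 1 - r"
  shows "Anti r (int m - 1) m (\<lambda>i. of_nat (m choose i) / of_nat (nat (1 - r) choose (m + i)) :: 'a::field_char_0)"
  unfolding Anti_def
proof (intro allI)
  fix j :: nat
  define M where "M = nat (1 - r)"
  have rM: "r = 1 - int M" using r by (simp add: M_def)
  have mM': "2 * m \<le> M" using mM by (simp add: M_def)
  define K where "K = (fact (M - Suc j) * fact (Suc j) / fact M :: 'a)"
  define w where "w = (\<lambda>i. of_nat (m choose i) / of_nat (M choose (m + i)) :: 'a)"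
  have trm: "w i * (-1)^j * gCi (int m - 1 + int i + r - 1) (int m - 1 + int i - int j)
      = (-1)^(m-1) * (K * ((-1)^i * of_nat (m choose i) * cz (m + i) (int (Suc j))))" if "i \<in> {0..m}" for i
  proof (cases "Suc j \<le> m + i")
    case False
    have "nat (1 + int j) = Suc j" by simp
    then show ?thesis using False by (simp add: gCi_def cz_def)
  next
    case True
    define b where "b = m + i - Suc j"
    have mi: "m + i \<le> M" using that mM' by simp
    have hb: "int m - 1 + int i - int j = int b" using True by (simp add: b_def)
    have hx: "(of_nat b - of_int (int m - 1 + int i + r - 1) - 1 :: 'a) = of_nat (M - Suc j)"
      using True mi by (simp add: b_def rM of_nat_diff)
    have g: "gCi (int m - 1 + int i + r - 1) (int m - 1 + int i - int j)
        = (-1)^b * (of_nat ((M - Suc j) choose b) :: 'a)"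
    proof -
      have "(of_int (int m - 1 + int i + r - 1) :: 'a) gchoose b
          = (-1)^b * ((of_nat b - of_int (int m - 1 + int i + r - 1) - 1) gchoose b)"
        by (rule gbinomial_negated_upper)
      also have "\<dots> = (-1)^b * of_nat ((M - Suc j) choose b)"
        by (simp only: hx binomial_gbinomial)
      finally show ?thesis unfolding hb gCi_def by simp
    qed
    have sg: "(-1::'a)^j * (-1)^b = (-1)^(m-1) * (-1)^i"
      using True m by (simp add: power_add[symmetric] b_def)
    have f: "of_nat ((M - Suc j) choose b) / of_nat (M choose (m + i)) = K * (of_nat ((m + i) choose Suc j) :: 'a)"
      unfolding b_def K_def using True mi by (rule FC1')
    have "w i * (-1)^j * gCi (int m - 1 + int i + r - 1) (int m - 1 + int i - int j)
        = of_nat (m choose i) * (((-1)^j * (-1)^b) * (of_nat ((M - Suc j) choose b) / of_nat (M choose (m + i))))"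
      unfolding g w_def by (simp add: algebra_simps)
    also have "\<dots> = (-1)^(m-1) * (K * ((-1)^i * of_nat (m choose i) * cz (m + i) (int (Suc j))))"
      unfolding sg f cz_nat by (simp add: algebra_simps)
    finally show ?thesis .
  qed
  have lhs: "(\<Sum>i=0..m. w i * (-1)^j * gCi (int m - 1 + int i + r - 1) (int m - 1 + int i - int j))
      = - (K * cz m (int (Suc j) - int m))"
  proof -
    have "(\<Sum>i=0..m. w i * (-1)^j * gCi (int m - 1 + int i + r - 1) (int m - 1 + int i - int j))
        = (\<Sum>i=0..m. (-1)^(m-1) * (K * ((-1)^i * of_nat (m choose i) * cz (m + i) (int (Suc j)))))"
      by (rule sum.cong[OF refl]) (rule trm)
    also have "\<dots> = (-1)^(m-1) * (K * (\<Sum>i=0..m. (-1)^i * of_nat (m choose i) * cz (m + i) (int (Suc j))))"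
      by (simp only: sum_distrib_left)
    also have "\<dots> = (-1)^(m-1) * (K * ((-1)^m * cz m (int (Suc j) - int m)))"
      by (simp only: V_ident)
    also have "(-1::'a)^(m-1) * (K * ((-1)^m * cz m (int (Suc j) - int m))) = ((-1)^(m-1) * (-1)^m) * (K * cz m (int (Suc j) - int m))"
      by (simp add: algebra_simps)
    also have "(-1::'a)^(m-1) * (-1)^m = -1"
    proof -
      have "odd (m - 1 + m)" using m by presburger
      then show ?thesis by (simp add: power_add[symmetric])
    qed
    finally show ?thesis by simp
  qed
  show "(\<Sum>i=0..m. of_nat (m choose i) / of_nat (nat (1 - r) choose (m + i)) * (-1)^j
           * gCi (int m - 1 + int i + r - 1) (int m - 1 + int i - int j))
      = - (if int m - 1 \<le> int j \<and> int j \<le> int m - 1 + int m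
           then of_nat (m choose nat (int j - (int m - 1))) / of_nat (nat (1 - r) choose (m + nat (int j - (int m - 1))))
           else (0::'a))"
  proof -
    have L: "(\<Sum>i=0..m. of_nat (m choose i) / of_nat (nat (1 - r) choose (m + i)) * (-1)^j
           * gCi (int m - 1 + int i + r - 1) (int m - 1 + int i - int j))
         = - (K * cz m (int (Suc j) - int m))"
      using lhs unfolding w_def M_def .
    show ?thesis
    proof (cases "Suc j < m")
      case True
      then show ?thesis unfolding L by (simp add: cz_def)
    next
      case False
      define t where "t = Suc j - m"
      have jt: "int j - (int m - 1) = int t" and mt: "m + t = Suc j" using False by (simp_all add: t_def)
      have ct: "int (Suc j) - int m = int t" using False by (simp add: t_def)
      show ?thesis
      proof (cases "t \<le> m")
        case False
        then show ?thesis unfolding L ct using jt by (simp add: cz_nat binomial_eq_0)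
      next
        case True
        have c: "int m - 1 \<le> int j \<and> int j \<le> int m - 1 + int m" using jt True by simp
        have jM: "Suc j \<le> M" using mt True mM' by simp
        have key: "K = 1 / of_nat (M choose Suc j)"
          unfolding K_def using jM by (rule FC2')
        show ?thesis unfolding L ct jt using c mt by (simp add: key cz_nat M_def[symmetric])
      qed
    qed
  qed
qed


lemma Phi_PhiF: "Phi r g n = PhiF r (Abs_fps g) $ n"
  by (simp add: PhiF_nth)

lemma Phi_invol: "Phi r (Phi r g) = (g :: nat \<Rightarrow> 'a::field_char_0)"
proof
  fix n
  have e: "Phi r g = (\<lambda>k. PhiF r (Abs_fps g) $ k)" by (rule ext) (simp add: Phi_PhiF)
  have "Phi r (Phi r g) n = PhiF r (PhiF r (Abs_fps g)) $ n"
    unfolding e by (rule PhiF_nth[symmetric])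
  also have "\<dots> = g n" by (simp add: PhiF_invol)
  finally show "Phi r (Phi r g) n = g n" .
qed

lemma Phi_diff: "Phi r (\<lambda>n. f n - h n) n = Phi r f n - (Phi r h n :: 'a::field_char_0)"
  by (simp add: Phi_def sum_subtractf[symmetric] algebra_simps)

lemma func_eq_iff_Phi:
  fixes \<gamma> :: "nat \<Rightarrow> 'a::field_char_0"
  shows "func_eq d a \<gamma> \<longleftrightarrow> (\<forall>n. Phi (- (a + int d)) \<gamma> n = \<gamma> n)"
  unfolding func_eq_iff_PhiF fps_eq_iff by (simp add: Phi_PhiF)

lemma self_neg:
  assumes "x = - x" shows "(x :: 'a::field_char_0) = 0"
proof -
  have "x + x = x + (- x)" using assms by (rule arg_cong)
  then have "x + x = 0" by simp
  then have "2 * x = 0" by (simp only: mult_2)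
  then show ?thesis by simp
qed

lemma generic:
  fixes r :: int and P :: "int \<Rightarrow> nat \<Rightarrow> (nat \<Rightarrow> 'a::field_char_0) \<Rightarrow> bool" and g :: "nat \<Rightarrow> 'a"
  assumes anti: "\<And>b l w. P b l w \<Longrightarrow> Anti r b l w"
  and cover: "\<And>n. odd n \<Longrightarrow> \<exists>b l w. P b l w \<and> b + int l = int n \<and> w l \<noteq> 0"
  shows "(\<forall>n. Phi r g n = g n) \<longleftrightarrow> (\<forall>b l w. P b l w \<longrightarrow> Lw b l w g = 0)"
proof
  assume h: "\<forall>n. Phi r g n = g n"
  have pg: "Phi r g = g" by (rule ext) (use h in simp)
  show "\<forall>b l w. P b l w \<longrightarrow> Lw b l w g = 0"
  proof (intro allI impI)
    fix b l w assume "P b l w"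
    then have "Lw b l w (Phi r g) = - Lw b l w g" by (intro Lw_Phi anti)
    then show "Lw b l w g = 0" unfolding pg by (rule self_neg)
  qed
next
  assume C: "\<forall>b l w. P b l w \<longrightarrow> Lw b l w g = 0"
  define D where "D = (\<lambda>n. g n - Phi r g n)"
  have PD: "Phi r D n = - D n" for n
    unfolding D_def Phi_diff Phi_invol by simp
  have LD: "Lw b l w D = 0" if "P b l w" for b l w
  proof -
    have "Lw b l w D = Lw b l w g - Lw b l w (Phi r g)" unfolding D_def by (rule Lw_diff)
    also have "\<dots> = 0" using Lw_Phi[OF anti[OF that]] C that by simp
    finally show ?thesis .
  qed
  have Z: "D n = 0" for n
  proof (induction n rule: less_induct)
    case (less n)
    show ?case
    proof (cases "even n")
      case True
      have "Phi r D n = (\<Sum>j\<in>insert n {0..<n}. (-1)^j * (of_int (int n + r - 1) gchoose (n - j)) * D j)"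
        unfolding Phi_def by (rule sum.cong) auto
      also have "\<dots> = (-1)^n * (of_int (int n + r - 1) gchoose 0) * D n"
        using less.IH by simp
      also have "\<dots> = D n" using True by simp
      finally have "D n = - D n" using PD[of n] by simp
      then show ?thesis by (rule self_neg)
    next
      case False
      then obtain b l w where bl: "P b l w" "b + int l = int n" "w l \<noteq> 0" using cover by blast
      have "Lw b l w D = w l * D n" using less.IH bl(2) by (intro Lw_top) auto
      then show ?thesis using LD[OF bl(1)] bl(3) by simp
    qed
  qed
  show "\<forall>n. Phi r g n = g n"
    using Z unfolding D_def by simp
qed


definition wA :: "nat \<Rightarrow> nat \<Rightarrow> 'a::field_char_0" where
  "wA m i = (-1)^i * of_nat ((m-1) choose i)"
definition wB :: "int \<Rightarrow> nat \<Rightarrow> nat \<Rightarrow> 'a::field_char_0" where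
  "wB r m i = (-1)^i * of_nat (nat (2 * int m + r - 2) choose (m - i)) * of_nat ((m + i) choose i)"
definition wC :: "int \<Rightarrow> nat \<Rightarrow> nat \<Rightarrow> 'a::field_char_0" where
  "wC r m i = of_nat (m choose i) / of_nat (nat (1 - r) choose (m + i))"
definition wD :: "nat \<Rightarrow> nat \<Rightarrow> 'a::field_char_0" where
  "wD m i = (-1)^i * of_nat (m choose i) * (of_nat (m + i) / of_nat m)"

definition Pcond :: "int \<Rightarrow> int \<Rightarrow> nat \<Rightarrow> (nat \<Rightarrow> 'a::field_char_0) \<Rightarrow> bool" where
  "Pcond r b l w \<longleftrightarrow>
     (\<exists>m. even r \<and> 1 \<le> m \<and> b = int m - r \<and> l = m - 1 \<and> w = wA m) \<or>
     (\<exists>m. 0 < r \<and> odd r \<and> 1 \<le> m \<and> b = int m - 1 \<and> l = m \<and> w = wB r m) \<or>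
     (\<exists>m. r < 0 \<and> 1 \<le> m \<and> 2 * int m \<le> 1 - r \<and> b = int m - 1 \<and> l = m \<and> w = wC r m) \<or>
     (\<exists>m. r < 0 \<and> odd r \<and> 1 \<le> m \<and> b = int m - r \<and> l = m \<and> w = wD m)"

lemma wA_eq: "wA m = (\<lambda>i. (-1)^i * of_nat ((m-1) choose i))"
  by (rule ext) (simp add: wA_def)
lemma wB_eq: "wB r m = (\<lambda>i. (-1)^i * of_nat (nat (2 * int m + r - 2) choose (m - i)) * of_nat ((m + i) choose i))"
  by (rule ext) (simp add: wB_def)
lemma wC_eq: "wC r m = (\<lambda>i. of_nat (m choose i) / of_nat (nat (1 - r) choose (m + i)))"
  by (rule ext) (simp add: wC_def)
lemma wD_eq: "wD m = (\<lambda>i. (-1)^i * of_nat (m choose i) * (of_nat (m + i) / of_nat m))"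
  by (rule ext) (simp add: wD_def)

lemma Pcond_anti: "Pcond r b l w \<Longrightarrow> Anti r b l (w :: nat \<Rightarrow> 'a::field_char_0)"
  unfolding Pcond_def
proof (elim disjE exE conjE)
  fix m assume "even r" "1 \<le> m" "b = int m - r" "l = m - 1" "w = wA m"
  then show ?thesis unfolding wA_eq using Anti_A[of r m, where 'a='a] by simp
next
  fix m assume "0 < r" "odd r" "1 \<le> m" "b = int m - 1" "l = m" "w = wB r m"
  then show ?thesis unfolding wB_eq using Anti_B[of r m, where 'a='a] by simp
next
  fix m assume "r < 0" "1 \<le> m" "2 * int m \<le> 1 - r" "b = int m - 1" "l = m" "w = wC r m"
  then show ?thesis unfolding wC_eq using Anti_C[of r m, where 'a='a] by simp
next
  fix m assume "r < 0" "odd r" "1 \<le> m" "b = int m - r" "l = m" "w = wD m"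
  then show ?thesis unfolding wD_eq using Anti_D[of r m, where 'a='a] by simp
qed

lemma Pcond_cover:
  assumes n: "odd n"
  shows "\<exists>b l w. Pcond r b l w \<and> b + int l = int n \<and> w l \<noteq> (0::'a::field_char_0)"
proof -
  have nC: "\<exists>b l w. Pcond r b l w \<and> b + int l = int n \<and> w l \<noteq> (0::'a)"
    if h: "r < 0" "int n + 1 \<le> 1 - r"
  proof -
    define m where "m = Suc n div 2"
    have m1: "1 \<le> m" and m2: "2 * m = Suc n" using n by (auto simp: m_def)
    have M: "2 * m \<le> nat (1 - r)" using h m2 by linarith
    have "(nat (1 - r) choose (m + m)) \<noteq> 0" using M by simp
    then have "wC r m m \<noteq> (0::'a)" by (simp add: wC_def)
    moreover have "Pcond r (int m - 1) m (wC r m)"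
    proof -
      have "2 * int m \<le> 1 - r" using h m2 by linarith
      then show ?thesis unfolding Pcond_def using h(1) m1 by blast
    qed
    moreover have "int m - 1 + int m = int n" using m2 by linarith
    ultimately show ?thesis by blast
  qed
  show ?thesis
  proof (cases "even r")
    case True
    show ?thesis
    proof (cases "int n \<ge> 1 - r")
      case True
      define q where "q = (int n + r + 1) div 2"
      have q2: "2 * q = int n + r + 1" using \<open>even r\<close> n unfolding q_def by presburger
      define m where "m = nat q"
      have m2: "2 * int m = int n + r + 1" using q2 True unfolding m_def by linarith
      have m1: "1 \<le> m" using m2 True by linarith
      have "wA m (m - 1) \<noteq> (0::'a)" by (simp add: wA_def)
      moreover have "Pcond r (int m - r) (m - 1) (wA m)"
        unfolding Pcond_def using \<open>even r\<close> m1 by auto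
      moreover have "int m - r + int (m - 1) = int n" using m2 m1 by linarith
      ultimately show ?thesis by blast
    next
      case False
      then show ?thesis using nC n by (intro nC) (simp_all, presburger)
    qed
  next
    case odd: False
    show ?thesis
    proof (cases "r > 0")
      case True
      define m where "m = Suc n div 2"
      have m1: "1 \<le> m" and m2: "2 * m = Suc n" using n by (auto simp: m_def)
      have "wB r m m \<noteq> (0::'a)" by (simp add: wB_def)
      moreover have "Pcond r (int m - 1) m (wB r m)"
        unfolding Pcond_def using odd True m1 by auto
      moreover have "int m - 1 + int m = int n" using m2 by linarith
      ultimately show ?thesis by blast
    next
      case False
      then have r0: "r < 0" using odd by (cases "r = 0") auto
      show ?thesis
      proof (cases "int n \<le> - r")
        case True
        then show ?thesis using r0 by (intro nC) simp_all
      next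
        case False
        define q where "q = (int n + r) div 2"
        have q2: "2 * q = int n + r" using odd n unfolding q_def by presburger
        define m where "m = nat q"
        have m2: "2 * int m = int n + r" using q2 False unfolding m_def by linarith
        have m1: "1 \<le> m" using m2 False odd n by presburger
        have "wD m m \<noteq> (0::'a)" using m1 by (simp add: wD_def)
        moreover have "Pcond r (int m - r) m (wD m)"
          unfolding Pcond_def using odd r0 m1 by auto
        moreover have "int m - r + int m = int n" using m2 by linarith
        ultimately show ?thesis by blast
      qed
    qed
  qed
qed

lemma ceil_iff: "int m \<le> \<lceil>real_of_int (- r) / 2\<rceil> \<longleftrightarrow> 2 * int m \<le> 1 - r"
proof -
  have "int m \<le> \<lceil>real_of_int (- r) / 2\<rceil> \<longleftrightarrow> real_of_int (int m) - 1 < real_of_int (- r) / 2"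
    by (rule le_ceiling_iff)
  also have "\<dots> \<longleftrightarrow> real_of_int (2 * int m - 2) < real_of_int (- r)"
    by (simp add: field_simps)
  also have "\<dots> \<longleftrightarrow> 2 * int m \<le> 1 - r"
    by (simp only: of_int_less_iff) linarith
  finally show ?thesis .
qed

lemma condA_Lw: "condA r \<gamma> m \<longleftrightarrow> Lw (int m - r) (m - 1) (wA m) \<gamma> = 0"
  by (simp add: condA_def Lw_def wA_def)

lemma condB_Lw: "condB r \<gamma> m \<longleftrightarrow> Lw (int m - 1) m (wB r m) \<gamma> = 0"
proof -
  have e: "int m + int i - 1 = int m - 1 + int i" for i by simp
  show ?thesis by (simp only: condB_def Lw_def wB_def e)
qed

lemma condC_Lw: "condC r \<gamma> m \<longleftrightarrow> Lw (int m - 1) m (wC r m) \<gamma> = 0"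
proof -
  have e: "int m + int i - 1 = int m - 1 + int i" for i by simp
  show ?thesis by (simp only: condC_def Lw_def wC_def e)
qed

lemma condD_Lw: "condD r \<gamma> m \<longleftrightarrow> Lw (int m - r) m (wD m) \<gamma> = 0"
  by (simp add: condD_def Lw_def wD_def)

lemma degree_conditions_iff:
  fixes \<gamma> :: "nat \<Rightarrow> 'a::field_char_0"
  shows "degree_conditions d a \<gamma> \<longleftrightarrow> (\<forall>b l w. Pcond (- (a + int d)) b l w \<longrightarrow> Lw b l w \<gamma> = 0)"
proof -
  define r where "r = - (a + int d)"
  have "degree_conditions d a \<gamma> \<longleftrightarrow>
       (even r \<longrightarrow> (\<forall>m\<ge>1. condA r \<gamma> m)) \<and>
       (r > 0 \<and> odd r \<longrightarrow> (\<forall>m\<ge>1. condB r \<gamma> m)) \<and>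
       (r < 0 \<longrightarrow> (\<forall>m. 1 \<le> m \<and> 2 * int m \<le> 1 - r \<longrightarrow> condC r \<gamma> m)) \<and>
       (r < 0 \<and> odd r \<longrightarrow> (\<forall>m\<ge>1. condD r \<gamma> m))"
    unfolding degree_conditions_def Let_def r_def[symmetric] ceil_iff ..
  also have "\<dots> \<longleftrightarrow> (\<forall>b l w. Pcond r b l w \<longrightarrow> Lw b l w \<gamma> = 0)"
    unfolding condA_Lw condB_Lw condC_Lw condD_Lw Pcond_def by blast
  finally show ?thesis by (simp only: r_def)
qed

lemma main:
  fixes \<gamma> :: "nat \<Rightarrow> 'a::field_char_0"
  shows "func_eq d a \<gamma> \<longleftrightarrow> degree_conditions d a \<gamma>"
  unfolding func_eq_iff_Phi degree_conditions_iff
  by (rule generic[OF Pcond_anti Pcond_cover])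

theorem theorem1p1:
  fixes d :: nat and a :: int
  shows "(\<forall>\<gamma> :: nat \<Rightarrow> rat. func_eq d a \<gamma> \<longleftrightarrow> degree_conditions d a \<gamma>) \<and>
         (\<forall>\<gamma> :: nat \<Rightarrow> real. func_eq d a \<gamma> \<longleftrightarrow> degree_conditions d a \<gamma>) \<and>
         (\<forall>\<gamma> :: nat \<Rightarrow> complex. func_eq d a \<gamma> \<longleftrightarrow> degree_conditions d a \<gamma>)"
  by (intro conjI allI main)

end
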